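(* A \textsc{2-Visits} instance $d_1\le\dots\le d_n$ in which at most two distinct numbers occur can be solved (i.e., it can be decided whether a feasible schedule exists) in $O(n)$ time.
   Context: \textsc{2-Visits}: given a non-decreasing sequence of $n$ positive integers (deadlines) $d_1\le \dots\le d_n$, decide whether there exists a schedule of length $2n$ (an assignment of one visit to each position $1,\dots,2n$) containing exactly two visits of each node $i\in[n]$, such that the first visit of $i$ is at position at most $d_i$ and the second visit of $i$ is at most $d_i$ positions after the first visit of $i$. *)

theory Defs
  imports Main
begin

definition two_visits_feasible :: "nat list \<Rightarrow> bool" where
  "two_visits_feasible ds \<longleftrightarrow>
     (\<exists>s :: nat \<Rightarrow> nat.
        (\<forall>p \<in> {1..2 * length ds}. s p < length ds) \<and>
        (\<forall>i < length ds. \<exists>p q. 1 \<le> p \<and> p < q \<and> q \<le> 2 * length ds \<and>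
            {r \<in> {1..2 * length ds}. s r = i} = {p, q} \<and>
            p \<le> ds ! i \<and> q - p \<le> ds ! i))"

text \<open>Register 0 initially holds the input length n, all other registers 0.
  Each executed instruction costs one time step.\<close>

datatype instr =
    Const nat nat
  | Add nat nat nat
  | Sub nat nat nat
  | Read nat nat
  | JmpLess nat nat nat
  | Jmp nat
  | Accept
  | Reject

datatype config = Running nat "nat \<Rightarrow> nat" | Halted bool

fun exec_instr :: "nat list \<Rightarrow> instr \<Rightarrow> nat \<Rightarrow> (nat \<Rightarrow> nat) \<Rightarrow> config" where
  "exec_instr ds (Const r c) pc R = Running (Suc pc) (R(r := c))"
| "exec_instr ds (Add r a b) pc R = Running (Suc pc) (R(r := R a + R b))"
| "exec_instr ds (Sub r a b) pc R = Running (Suc pc) (R(r := R a - R b))"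
| "exec_instr ds (Read r i) pc R =
     Running (Suc pc) (R(r := (if R i < length ds then ds ! (R i) else 0)))"
| "exec_instr ds (JmpLess a b l) pc R = Running (if R a < R b then l else Suc pc) R"
| "exec_instr ds (Jmp l) pc R = Running l R"
| "exec_instr ds Accept pc R = Halted True"
| "exec_instr ds Reject pc R = Halted False"

definition step :: "instr list \<Rightarrow> nat list \<Rightarrow> config \<Rightarrow> config" where
  "step P ds c = (case c of
      Halted b \<Rightarrow> Halted b
    | Running pc R \<Rightarrow> (if pc < length P then exec_instr ds (P ! pc) pc R else Halted False))"

definition run :: "instr list \<Rightarrow> nat list \<Rightarrow> nat \<Rightarrow> config" where
  "run P ds t = (step P ds ^^ t) (Running 0 (\<lambda>r. if r = 0 then length ds else 0))"

end

theory Submission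
  imports Defs
begin

lemma feasible_intro:
  fixes ds :: "nat list" and P Q :: "nat \<Rightarrow> nat"
  assumes bnd: "\<forall>v<length ds. 1 \<le> P v \<and> P v < Q v \<and> Q v \<le> 2 * length ds \<and> P v \<le> ds!v \<and> Q v - P v \<le> ds!v"
    and dis: "\<forall>v<length ds. \<forall>u<length ds. P v \<noteq> Q u"
    and iP: "inj_on P {..<length ds}" and iQ: "inj_on Q {..<length ds}"
  shows "two_visits_feasible ds"
proof -
  define N where "N = length ds"
  define g where "g = (\<lambda>(v::nat, j::bool). if j then Q v else P v)"
  define D where "D = {..<N} \<times> (UNIV :: bool set)"
  have ig: "inj_on g D"
  proof (rule inj_onI)
    fix x y assume "x \<in> D" "y \<in> D" "g x = g y"
    then show "x = y" using dis iP iQ unfolding g_def D_def N_def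
      apply (cases x; cases y)
      apply (rename_tac v1 j1 v2 j2)
      apply (case_tac j1; case_tac j2)
      apply (simp_all add: inj_on_def)
      apply metis+
      done
  qed
  have sub: "g ` D \<subseteq> {1..2*N}"
    using bnd unfolding g_def D_def N_def by auto
  have cD: "card D = 2 * N" unfolding D_def by (simp add: card_cartesian_product)
  have eq: "g ` D = {1..2*N}"
    using card_subset_eq[OF _ sub] card_image[OF ig] cD by simp
  define s where "s r = fst (the_inv_into D g r)" for r
  have s1: "s r < N \<and> g (s r, snd (the_inv_into D g r)) = r" if "r \<in> {1..2*N}" for r
  proof -
    have "r \<in> g ` D" using eq that by simp
    then have "the_inv_into D g r \<in> D" "g (the_inv_into D g r) = r"
      using the_inv_into_into[OF ig] f_the_inv_into_f[OF ig] by auto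
    then show ?thesis unfolding s_def D_def by (cases "the_inv_into D g r") auto
  qed
  have s2: "s (g (v,j)) = v" if "v < N" for v j
  proof -
    have "(v,j) \<in> D" using that D_def by auto
    then show ?thesis unfolding s_def using the_inv_into_f_f[OF ig] by simp
  qed
  show ?thesis unfolding two_visits_feasible_def
  proof (intro exI[of _ s] conjI allI impI ballI)
    fix p assume "p \<in> {1..2 * length ds}" then show "s p < length ds" using s1 N_def by auto
  next
    fix i assume i: "i < length ds"
    have "{r \<in> {1..2 * length ds}. s r = i} = {P i, Q i}"
    proof
      show "{r \<in> {1..2 * length ds}. s r = i} \<subseteq> {P i, Q i}"
      proof
        fix r assume "r \<in> {r \<in> {1..2 * length ds}. s r = i}"
        then have "r \<in> {1..2*N}" "s r = i" using N_def by auto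
        with s1[of r] have "g (i, snd (the_inv_into D g r)) = r" by auto
        then show "r \<in> {P i, Q i}" unfolding g_def by (auto split: if_splits)
      qed
    next
      have "s (P i) = i" using s2[of i False] i N_def g_def by simp
      moreover have "s (Q i) = i" using s2[of i True] i N_def g_def by simp
      ultimately show "{P i, Q i} \<subseteq> {r \<in> {1..2 * length ds}. s r = i}"
        using bnd i by auto
    qed
    then show "\<exists>p q. 1 \<le> p \<and> p < q \<and> q \<le> 2 * length ds \<and>
            {r \<in> {1..2 * length ds}. s r = i} = {p, q} \<and> p \<le> ds ! i \<and> q - p \<le> ds ! i"
      using bnd i by (intro exI[of _ "P i"] exI[of _ "Q i"]) auto
  qed
qed

lemma feasible_elim:
  fixes ds :: "nat list"
  assumes "two_visits_feasible ds"
  obtains P Q where "\<forall>v<length ds. 1 \<le> P v \<and> P v < Q v \<and> Q v \<le> 2 * length ds \<and> P v \<le> ds!v \<and> Q v - P v \<le> ds!v"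
    and "\<forall>v<length ds. \<forall>u<length ds. P v \<noteq> Q u"
    and "inj_on P {..<length ds}" and "inj_on Q {..<length ds}"
    and "\<forall>r\<in>{1..2*length ds}. \<exists>v<length ds. r = P v \<or> r = Q v"
proof -
  define N where "N = length ds"
  obtain s where s1: "\<forall>p \<in> {1..2 * N}. s p < N"
    and s2: "\<forall>i < N. \<exists>p q. 1 \<le> p \<and> p < q \<and> q \<le> 2 * N \<and>
            {r \<in> {1..2 * N}. s r = i} = {p, q} \<and> p \<le> ds ! i \<and> q - p \<le> ds ! i"
    using assms unfolding two_visits_feasible_def N_def by blast
  define \<Phi> where "\<Phi> i p q \<longleftrightarrow> 1 \<le> p \<and> p < q \<and> q \<le> 2 * N \<and>
            {r \<in> {1..2 * N}. s r = i} = {p, q} \<and> p \<le> ds ! i \<and> q - p \<le> ds ! i" for i p q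
  have "\<forall>i. \<exists>p. i < N \<longrightarrow> (\<exists>q. \<Phi> i p q)" using s2 unfolding \<Phi>_def by blast
  from choice[OF this] obtain P where P: "\<forall>i. i < N \<longrightarrow> (\<exists>q. \<Phi> i (P i) q)" by blast
  have "\<forall>i. \<exists>q. i < N \<longrightarrow> \<Phi> i (P i) q" using P by blast
  from choice[OF this] obtain Q where Q: "\<forall>i. i < N \<longrightarrow> \<Phi> i (P i) (Q i)" by blast
  have f': "\<forall>i<N. 1 \<le> P i \<and> P i < Q i \<and> Q i \<le> 2 * N \<and>
            {r \<in> {1..2 * N}. s r = i} = {P i, Q i} \<and> P i \<le> ds ! i \<and> Q i - P i \<le> ds ! i"
    using Q unfolding \<Phi>_def by blast
  have fb: "\<forall>i<N. 1 \<le> P i \<and> P i < Q i \<and> Q i \<le> 2 * N \<and> P i \<le> ds ! i \<and> Q i - P i \<le> ds ! i"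
    using f' by blast
  have fs: "r \<in> {1..2 * N} \<and> s r = i \<longleftrightarrow> r = P i \<or> r = Q i" if "i < N" for i r
  proof -
    have "{r \<in> {1..2 * N}. s r = i} = {P i, Q i}" using f' that by blast
    then have "r \<in> {r \<in> {1..2 * N}. s r = i} \<longleftrightarrow> r \<in> {P i, Q i}" by (rule arg_cong)
    then show ?thesis by simp
  qed
  have sP: "s (P i) = i" and sQ: "s (Q i) = i" if "i < N" for i
    using fs[OF that, of "P i"] fs[OF that, of "Q i"] by simp_all
  show ?thesis
  proof (rule that)
    show "\<forall>v<length ds. 1 \<le> P v \<and> P v < Q v \<and> Q v \<le> 2 * length ds \<and> P v \<le> ds!v \<and> Q v - P v \<le> ds!v"
      using fb N_def by simp
    show "\<forall>v<length ds. \<forall>u<length ds. P v \<noteq> Q u"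
    proof (intro allI impI)
      fix v u assume "v < length ds" "u < length ds"
      then show "P v \<noteq> Q u" using sP[of v] sQ[of u] fb N_def by (cases "v = u") auto
    qed
    show "inj_on P {..<length ds}" proof (rule inj_onI)
      fix x y assume xy: "x \<in> {..<length ds}" "y \<in> {..<length ds}" and e: "P x = P y"
      from xy have "x < N" "y < N" by (simp_all add: N_def)
      have "x = s (P x)" using sP[OF \<open>x < N\<close>] by simp
      also have "\<dots> = s (P y)" using e by simp
      also have "\<dots> = y" using sP[OF \<open>y < N\<close>] by simp
      finally show "x = y" .
    qed
    show "inj_on Q {..<length ds}" proof (rule inj_onI)
      fix x y assume xy: "x \<in> {..<length ds}" "y \<in> {..<length ds}" and e: "Q x = Q y"
      from xy have "x < N" "y < N" by (simp_all add: N_def)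
      have "x = s (Q x)" using sQ[OF \<open>x < N\<close>] by simp
      also have "\<dots> = s (Q y)" using e by simp
      also have "\<dots> = y" using sQ[OF \<open>y < N\<close>] by simp
      finally show "x = y" .
    qed
    show "\<forall>r\<in>{1..2*length ds}. \<exists>v<length ds. r = P v \<or> r = Q v"
    proof
      fix r assume r: "r \<in> {1..2*length ds}"
      then have "s r < N" using s1 N_def by auto
      moreover have "r = P (s r) \<or> r = Q (s r)" using fs[OF \<open>s r < N\<close>, of r] r N_def by simp
      ultimately show "\<exists>v<length ds. r = P v \<or> r = Q v" using N_def by blast
    qed
  qed
qed

lemma rr_feasible:
  fixes ds :: "nat list" and x :: nat
  assumes x: "x \<le> length ds"
    and lo: "\<forall>v<length ds. v < x \<longrightarrow> v + 1 \<le> ds!v \<and> x \<le> ds!v"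
    and hi: "\<forall>v<length ds. x \<le> v \<longrightarrow> x + v + 1 \<le> ds!v \<and> length ds - x \<le> ds!v"
  shows "two_visits_feasible ds"
proof -
  define N where "N = length ds"
  define P where "P v = (if v < x then v + 1 else x + v + 1)" for v
  define Q where "Q v = (if v < x then x + v + 1 else N + v + 1)" for v
  show ?thesis
  proof (rule feasible_intro[of ds P Q])
    show "\<forall>v<length ds. 1 \<le> P v \<and> P v < Q v \<and> Q v \<le> 2 * length ds \<and> P v \<le> ds!v \<and> Q v - P v \<le> ds!v"
    proof (intro allI impI)
      fix v assume v: "v < length ds"
      show "1 \<le> P v \<and> P v < Q v \<and> Q v \<le> 2 * length ds \<and> P v \<le> ds!v \<and> Q v - P v \<le> ds!v"
      proof (cases "v < x")
        case True
        then show ?thesis using lo v x unfolding P_def Q_def N_def by auto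
      next
        case False
        then show ?thesis using hi v x unfolding P_def Q_def N_def by auto
      qed
    qed
    show "\<forall>v<length ds. \<forall>u<length ds. P v \<noteq> Q u"
      unfolding P_def Q_def N_def using x by auto
    show "inj_on P {..<length ds}"
      unfolding P_def by (rule inj_onI) (auto split: if_splits)
    show "inj_on Q {..<length ds}"
      unfolding Q_def N_def using x by (intro inj_onI) (auto split: if_splits)
  qed
qed

lemma edf:
  fixes S :: "nat set" and \<kappa> :: "nat \<Rightarrow> nat"
  assumes fin: "finite S" and hall: "\<forall>K. card {v\<in>S. \<kappa> v \<le> K} \<le> K"
  defines "\<rho> \<equiv> \<lambda>i. card {v\<in>S. \<kappa> v < \<kappa> i \<or> (\<kappa> v = \<kappa> i \<and> v \<le> i)}"
  shows "inj_on \<rho> S" and "\<forall>i\<in>S. 1 \<le> \<rho> i \<and> \<rho> i \<le> card S \<and> \<rho> i \<le> \<kappa> i"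
proof -
  define A where "A i = {v\<in>S. \<kappa> v < \<kappa> i \<or> (\<kappa> v = \<kappa> i \<and> v \<le> i)}" for i
  have rA: "\<rho> i = card (A i)" for i unfolding \<rho>_def A_def by simp
  have lt: "\<rho> i < \<rho> j" if "i \<in> S" "j \<in> S" "\<kappa> i < \<kappa> j \<or> (\<kappa> i = \<kappa> j \<and> i < j)" for i j
  proof -
    have "A i \<subset> A j"
    proof
      show "A i \<subseteq> A j" using that unfolding A_def by auto
      have "j \<in> A j" "j \<notin> A i" using that unfolding A_def by auto
      then show "A i \<noteq> A j" by blast
    qed
    moreover have "finite (A j)" using fin unfolding A_def by simp
    ultimately show ?thesis using rA psubset_card_mono by metis
  qed
  show "inj_on \<rho> S"
  proof (rule inj_onI)
    fix i j assume ij: "i \<in> S" "j \<in> S" "\<rho> i = \<rho> j"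
    show "i = j"
    proof (rule ccontr)
      assume "i \<noteq> j"
      then have "(\<kappa> i < \<kappa> j \<or> (\<kappa> i = \<kappa> j \<and> i < j)) \<or> (\<kappa> j < \<kappa> i \<or> (\<kappa> j = \<kappa> i \<and> j < i))"
        by linarith
      then show False using lt[of i j] lt[of j i] ij by auto
    qed
  qed
  show "\<forall>i\<in>S. 1 \<le> \<rho> i \<and> \<rho> i \<le> card S \<and> \<rho> i \<le> \<kappa> i"
  proof
    fix i assume i: "i \<in> S"
    have fA: "finite (A i)" using fin unfolding A_def by simp
    have "i \<in> A i" using i unfolding A_def by simp
    then have "1 \<le> card (A i)" using fA by (metis One_nat_def Suc_leI card_gt_0_iff empty_iff)
    moreover have "card (A i) \<le> card S" using fin unfolding A_def by (intro card_mono) auto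
    moreover have "card (A i) \<le> card {v\<in>S. \<kappa> v \<le> \<kappa> i}"
      using fin unfolding A_def by (intro card_mono) auto
    ultimately show "1 \<le> \<rho> i \<and> \<rho> i \<le> card S \<and> \<rho> i \<le> \<kappa> i" using hall rA by (metis le_trans)
  qed
qed

lemma divmod_mono_w:
  fixes q w t t' :: nat
  assumes "0 < q" "q \<le> w" "t \<le> t'"
  shows "(t div q) * w + t mod q \<le> (t' div q) * w + t' mod q"
proof (cases "t div q = t' div q")
  case True
  have "t = q * (t div q) + t mod q" "t' = q * (t' div q) + t' mod q" by simp_all
  moreover have "q * (t div q) = q * (t' div q)" using True by simp
  ultimately have "t mod q \<le> t' mod q" using assms(3) by linarith
  then show ?thesis using True by simp
next
  case False
  have "t div q \<le> t' div q" using assms(3) by (simp add: div_le_mono)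
  with False have lt: "t div q + 1 \<le> t' div q" by simp
  have "t mod q < q" using assms(1) by simp
  then have "(t div q) * w + t mod q < (t div q) * w + w" using assms(2) by linarith
  also have "\<dots> = (t div q + 1) * w" by simp
  also have "\<dots> \<le> (t' div q) * w" using lt by (rule mult_right_mono) simp
  finally show ?thesis by simp
qed

lemma lin_unique:
  fixes x1 x2 r1 r2 w :: nat
  assumes "x1 * w + r1 = x2 * w + r2" "r1 < w" "r2 < w"
  shows "x1 = x2 \<and> r1 = r2"
proof -
  have w0: "w \<noteq> 0" using assms by simp
  have d: "(x * w + r) div w = x" if "r < w" for x r
  proof -
    have "(r + x * w) div w = x + r div w" using w0 by (rule div_mult_self1)
    then show ?thesis using that by (simp add: add.commute)
  qed
  have "x1 = (x1 * w + r1) div w" using d[OF assms(2)] by simp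
  also have "\<dots> = (x2 * w + r2) div w" using assms(1) by simp
  also have "\<dots> = x2" using d[OF assms(3)] by simp
  finally have x: "x1 = x2" .
  then show ?thesis using assms(1) by simp
qed

lemma mod_window_inj:
  fixes X w :: nat
  assumes "0 < w"
  shows "inj_on (\<lambda>i. (i - 1) mod w) {X<..X+w}"
proof (rule inj_onI)
  fix i j assume i: "i \<in> {X<..X+w}" and j: "j \<in> {X<..X+w}" and eq: "(i - 1) mod w = (j - 1) mod w"
  show "i = j"
  proof (rule ccontr)
    assume ne: "i \<noteq> j"
    have key: "False" if "x < y" "x \<in> {X<..X+w}" "y \<in> {X<..X+w}" "(x - 1) mod w = (y - 1) mod w" for x y
    proof -
      have "x - 1 \<le> y - 1" using that by simp
      then have "w dvd (y - 1) - (x - 1)" using that(4) mod_eq_dvd_iff_nat by metis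
      moreover have "(y - 1) - (x - 1) = y - x" using that by auto
      moreover have "0 < y - x" "y - x < w" using that by auto
      ultimately show False using nat_dvd_not_less by metis
    qed
    show False
    proof (cases "i < j")
      case True then show ?thesis using key[of i j] i j eq by blast
    next
      case False then have "j < i" using ne by simp
      then show ?thesis using key[of j i] i j eq by simp
    qed
  qed
qed

lemma periodic_feasible:
  fixes ds :: "nat list" and a b k e \<delta> :: nat
  assumes N: "length ds = a + \<delta> + e"
    and b: "b = length ds + e"
    and e1: "1 \<le> e" and ek: "e < k" and kN: "k \<le> length ds"
    and d1: "1 \<le> \<delta>"
    and cond: "((k - e - 1) div (2*e) + 1) * (\<delta> + 2*e) + (k - e - 1) mod (2*e) + 1 \<le> a"
    and da: "\<forall>v<k. a \<le> ds!v" and db: "\<forall>v<length ds. k \<le> v \<longrightarrow> b \<le> ds!v"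
  shows "two_visits_feasible ds"
proof -
  define N where "N = length ds"
  define w where "w = \<delta> + 2*e"
  define y where "y = k - e"
  define L where "L = N - e"
  define q where "q = 2*e"
  have q0: "0 < q" and qw: "q \<le> w" and qw': "q < w" using e1 d1 unfolding q_def w_def by auto
  define f where "f t = \<delta> + (t div q) * w + t mod q + 1" for t
  define I where "I = f ` {..<y}"
  define S where "S = {1..L}"
  define J where "J = S - I"
  have y1: "1 \<le> y" using ek y_def by simp
  have cond': "((y - 1) div q + 1) * w + (y - 1) mod q + 1 \<le> a"
    using cond unfolding y_def q_def w_def by simp
  have wa: "w \<le> a" using cond' by (metis add_leD1 le_add2 mult_Suc_right mult.commute Suc_eq_plus1 le_trans)
  have F1: "q + f t \<le> a" if "t < y" for t
  proof -
    have "(t div q) * w + t mod q \<le> ((y - 1) div q) * w + (y - 1) mod q"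
      using divmod_mono_w[OF q0 qw, of t "y - 1"] that by simp
    then show ?thesis using cond' unfolding f_def w_def q_def by (simp add: algebra_simps)
  qed
  have F2: "inj_on f {..<y}"
  proof (rule inj_onI)
    fix t1 t2 assume "t1 \<in> {..<y}" "t2 \<in> {..<y}" "f t1 = f t2"
    then have "(t1 div q) * w + t1 mod q = (t2 div q) * w + t2 mod q" unfolding f_def by simp
    moreover have "t1 mod q < w" "t2 mod q < w" using q0 qw by (meson mod_less_divisor order_less_le_trans)+
    ultimately have "t1 div q = t2 div q \<and> t1 mod q = t2 mod q" by (rule lin_unique)
    then show "t1 = t2" by (metis div_mult_mod_eq)
  qed
  have aN: "a < N" using N d1 N_def by simp
  have F3: "I \<subseteq> S"
  proof
    fix i assume "i \<in> I"
    then obtain t where t: "t < y" "i = f t" unfolding I_def by auto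
    have "q + i \<le> a" using F1 t by simp
    then show "i \<in> S" unfolding S_def L_def using t aN q_def f_def by auto
  qed
  have finS: "finite S" unfolding S_def by simp
  have cI: "card I = y" unfolding I_def using card_image[OF F2] by simp
  have cS: "card S = L" unfolding S_def by simp
  have cJ: "card J = N - k" unfolding J_def using card_Diff_subset[OF _ F3] cI cS finS
    by (metis L_def y_def finite_subset F3 diff_diff_cancel ek kN N_def le_diff_iff less_imp_le_nat diff_le_mono2 diff_commute diff_diff_left)
  have fI: "i \<in> I \<Longrightarrow> \<exists>t<y. i = f t" for i unfolding I_def by auto
  have F4: "card (I \<inter> {X<..X+w}) \<le> q" for X
  proof -
    define h where "h i = (i - 1) mod w" for i
    have w0: "0 < w" using qw' by simp
    have ih: "inj_on h (I \<inter> {X<..X+w})"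
      using inj_on_subset[OF mod_window_inj[OF w0, of X]] unfolding h_def by blast
    have "h ` (I \<inter> {X<..X+w}) \<subseteq> {\<delta>..<w}"
    proof
      fix z assume "z \<in> h ` (I \<inter> {X<..X+w})"
      then obtain i where i: "i \<in> I" "z = h i" by auto
      then obtain t where t: "t < y" "i = f t" using fI by blast
      have "i - 1 = (\<delta> + t mod q) + (t div q) * w" unfolding t f_def by simp
      moreover have "\<delta> + t mod q < w" unfolding w_def q_def using q0 q_def by simp
      ultimately have "h i = \<delta> + t mod q" unfolding h_def by simp
      then show "z \<in> {\<delta>..<w}" using i \<open>\<delta> + t mod q < w\<close> by simp
    qed
    then have "card (I \<inter> {X<..X+w}) \<le> card {\<delta>..<w}"
      by (intro card_inj_on_le[OF ih]) auto
    then show ?thesis unfolding w_def q_def by simp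
  qed
  have F5: "card (I \<inter> {..K+\<delta>}) \<le> K" if "K < q" for K
  proof -
    have "I \<inter> {..K+\<delta>} \<subseteq> f ` {..<K}"
    proof
      fix i assume "i \<in> I \<inter> {..K+\<delta>}"
      then obtain t where t: "t < y" "i = f t" "f t \<le> K + \<delta>" using fI by blast
      have "t div q = 0"
      proof (rule ccontr)
        assume "t div q \<noteq> 0"
        then have "1 * w \<le> (t div q) * w" by (intro mult_le_mono1) simp
        then have "\<delta> + w + 1 \<le> f t" unfolding f_def by linarith
        then show False using t that qw by simp
      qed
      then have "t < q" using q0 by (simp add: div_eq_0_iff)
      then have "f t = \<delta> + t + 1" unfolding f_def using \<open>t div q = 0\<close> by simp
      then have "t < K" using t by simp
      then show "i \<in> f ` {..<K}" using t by simp
    qed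
    then have "card (I \<inter> {..K+\<delta>}) \<le> card (f ` {..<K})" by (intro card_mono) auto
    also have "\<dots> \<le> K" using card_image_le[of "{..<K}" f] by simp
    finally show ?thesis .
  qed
  define \<kappa> where "\<kappa> i = (if i \<in> I then i - \<delta> else i + q)" for i
  have Ige: "\<delta> + 1 \<le> i" if "i \<in> I" for i using fI[OF that] unfolding f_def by auto
  have hall: "\<forall>K. card {v\<in>S. \<kappa> v \<le> K} \<le> K"
  proof
    fix K
    have sub: "{v\<in>S. \<kappa> v \<le> K} \<subseteq> (I \<inter> {..K+\<delta>}) \<union> (J \<inter> {v. v + q \<le> K})"
      unfolding \<kappa>_def J_def using Ige by auto
    have finIJ: "finite (I \<inter> {..K+\<delta>})" "finite (J \<inter> {v. v + q \<le> K})"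
      using F3 finS unfolding J_def by (auto intro: finite_subset)
    show "card {v\<in>S. \<kappa> v \<le> K} \<le> K"
    proof (cases "K < q")
      case True
      then have "J \<inter> {v. v + q \<le> K} = {}" by auto
      then have "card {v\<in>S. \<kappa> v \<le> K} \<le> card (I \<inter> {..K+\<delta>})"
        using sub finIJ by (intro card_mono) auto
      then show ?thesis using F5[OF True] by simp
    next
      case False
      define M where "M = K - q"
      have KM: "K = M + q" using False M_def by simp
      have s1: "I \<inter> {..K+\<delta>} \<subseteq> (I \<inter> {..M}) \<union> (I \<inter> {M<..M+w})"
        unfolding KM w_def q_def by auto
      have s2: "J \<inter> {v. v + q \<le> K} = J \<inter> {..M}" unfolding KM by auto
      have fin3: "finite (I \<inter> {..M})" "finite (I \<inter> {M<..M+w})" "finite (J \<inter> {..M})"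
        using F3 finS unfolding J_def by (auto intro: finite_subset)
      have "card {v\<in>S. \<kappa> v \<le> K} \<le> card ((I \<inter> {..K+\<delta>}) \<union> (J \<inter> {v. v + q \<le> K}))"
        using sub finIJ by (intro card_mono) auto
      also have "\<dots> \<le> card (I \<inter> {..K+\<delta>}) + card (J \<inter> {v. v + q \<le> K})" by (rule card_Un_le)
      also have "\<dots> \<le> card (I \<inter> {..M}) + card (I \<inter> {M<..M+w}) + card (J \<inter> {..M})"
      proof -
        have "card (I \<inter> {..K+\<delta>}) \<le> card ((I \<inter> {..M}) \<union> (I \<inter> {M<..M+w}))"
          using s1 fin3 by (intro card_mono) auto
        also have "\<dots> \<le> card (I \<inter> {..M}) + card (I \<inter> {M<..M+w})" by (rule card_Un_le)
        finally show ?thesis using s2 by simp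
      qed
      also have "\<dots> \<le> M + q"
      proof -
        have "card (I \<inter> {..M}) + card (J \<inter> {..M}) = card ((I \<inter> {..M}) \<union> (J \<inter> {..M}))"
          using fin3 unfolding J_def by (intro card_Un_disjoint[symmetric]) auto
        also have "\<dots> \<le> card {1..M}"
          using F3 unfolding J_def S_def by (intro card_mono) auto
        finally show ?thesis using F4[of M] by simp
      qed
      finally show ?thesis using KM by simp
    qed
  qed
  define \<rho> where "\<rho> i = card {v\<in>S. \<kappa> v < \<kappa> i \<or> (\<kappa> v = \<kappa> i \<and> v \<le> i)}" for i
  have r_inj: "inj_on \<rho> S" and r_b: "\<forall>i\<in>S. 1 \<le> \<rho> i \<and> \<rho> i \<le> card S \<and> \<rho> i \<le> \<kappa> i"
    using edf[OF finS hall] unfolding \<rho>_def by auto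
  have finJ: "finite J" using finS unfolding J_def by simp
  have "card {k..<N} = card J" using cJ by simp
  then obtain \<sigma> where sig: "bij_betw \<sigma> {k..<N} J"
    using finite_same_card_bij[of "{k..<N}" J] finJ by auto
  have sigJ: "\<sigma> v \<in> J" if "k \<le> v" "v < N" for v using sig that bij_betwE by fastforce
  have sig_inj: "inj_on \<sigma> {k..<N}" using sig bij_betw_def by blast
  define slot where "slot v = (if v < k then f (v - e) else \<sigma> v)" for v
  have slotS: "slot v \<in> S" if "e \<le> v" "v < N" for v
  proof (cases "v < k")
    case True
    then have "f (v - e) \<in> I" unfolding I_def y_def using that by auto
    then show ?thesis using F3 True unfolding slot_def by auto
  next
    case False
    then show ?thesis using sigJ[of v] that unfolding slot_def J_def by auto
  qed
  have slot_inj: "slot v1 = slot v2 \<Longrightarrow> v1 = v2" if "e \<le> v1" "v1 < N" "e \<le> v2" "v2 < N" for v1 v2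
  proof -
    assume eq: "slot v1 = slot v2"
    have aI: "slot v \<in> I" if "e \<le> v" "v < k" for v
      using that unfolding slot_def I_def y_def by auto
    have bJ: "slot v \<in> J" if "k \<le> v" "v < N" for v
      using that sigJ unfolding slot_def by auto
    show "v1 = v2"
    proof (cases "v1 < k"; cases "v2 < k")
      assume "v1 < k" "v2 < k"
      then have "f (v1 - e) = f (v2 - e)" using eq unfolding slot_def by simp
      then have "v1 - e = v2 - e" using F2 \<open>v1 < k\<close> \<open>v2 < k\<close> unfolding y_def
        by (meson diff_less_mono inj_on_def lessThan_iff that(1) that(3))
      then show ?thesis using that by simp
    next
      assume "v1 < k" "\<not> v2 < k"
      then show ?thesis using aI[of v1] bJ[of v2] eq that unfolding J_def by auto
    next
      assume "\<not> v1 < k" "v2 < k"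
      then show ?thesis using aI[of v2] bJ[of v1] eq that unfolding J_def by auto
    next
      assume "\<not> v1 < k" "\<not> v2 < k"
      then have "\<sigma> v1 = \<sigma> v2" using eq unfolding slot_def by simp
      then show ?thesis using sig_inj \<open>\<not> v1 < k\<close> \<open>\<not> v2 < k\<close> that inj_onD by fastforce
    qed
  qed
  define P where "P v = (if v < e then v + 1 else q + slot v)" for v
  define Q where "Q v = (if v < e then e + v + 1 else N + e + \<rho> (slot v))" for v
  have LN: "L + e = N" unfolding L_def using ek kN N_def by simp
  have late: "q + 1 \<le> P v \<and> P v \<le> N + e \<and> N + e + 1 \<le> Q v \<and> Q v \<le> 2 * N"
    if "e \<le> v" "v < N" for v
  proof -
    have "slot v \<in> S" using slotS that by simp
    then have "1 \<le> slot v" "slot v \<le> L" "1 \<le> \<rho> (slot v)" "\<rho> (slot v) \<le> L"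
      using r_b cS unfolding S_def by auto
    then show ?thesis using that LN unfolding P_def Q_def q_def by auto
  qed
  have early: "1 \<le> P v \<and> P v \<le> e \<and> e + 1 \<le> Q v \<and> Q v \<le> q" if "v < e" for v
    using that unfolding P_def Q_def q_def by auto
  have ea: "e \<le> a" using wa unfolding w_def by simp
  show ?thesis
  proof (rule feasible_intro[of ds P Q])
    show "\<forall>v<length ds. 1 \<le> P v \<and> P v < Q v \<and> Q v \<le> 2 * length ds \<and> P v \<le> ds!v \<and> Q v - P v \<le> ds!v"
    proof (intro allI impI)
      fix v assume v: "v < length ds"
      show "1 \<le> P v \<and> P v < Q v \<and> Q v \<le> 2 * length ds \<and> P v \<le> ds!v \<and> Q v - P v \<le> ds!v"
      proof (cases "v < e")
        case True
        have "a \<le> ds!v" using da True ek by simp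
        moreover have "Q v - P v = e" using True unfolding P_def Q_def by simp
        ultimately show ?thesis using early[OF True] ea True kN N_def ek by auto
      next
        case False
        have lv: "q + 1 \<le> P v \<and> P v \<le> N + e \<and> N + e + 1 \<le> Q v \<and> Q v \<le> 2 * N"
          using late[of v] False v N_def by simp
        have sv: "slot v \<in> S" using slotS False v N_def by simp
        have rk: "\<rho> (slot v) \<le> \<kappa> (slot v)" using r_b sv by auto
        have PQ: "P v = q + slot v" "Q v = N + e + \<rho> (slot v)" using False unfolding P_def Q_def by auto
        show ?thesis
        proof (cases "v < k")
          case True
          have sI: "slot v \<in> I" using True False unfolding slot_def I_def y_def by auto
          then obtain t where t: "t < y" "slot v = f t" using fI by blast
          have "P v \<le> a" using F1[OF t(1)] t PQ by simp
          moreover have "a \<le> ds!v" using da True by simp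
          moreover have "\<delta> + 1 \<le> slot v" using Ige sI by simp
          moreover have "\<rho> (slot v) \<le> slot v - \<delta>" using rk sI unfolding \<kappa>_def by simp
          ultimately show ?thesis using lv PQ N N_def unfolding q_def by auto
        next
          case vk: False
          have sJ: "slot v \<notin> I" using vk sigJ[of v] v N_def unfolding slot_def J_def by auto
          have "\<rho> (slot v) \<le> slot v + q" using rk sJ unfolding \<kappa>_def by simp
          moreover have "b \<le> ds!v" using db vk v by simp
          ultimately show ?thesis using lv PQ b N_def unfolding q_def by auto
        qed
      qed
    qed
    show "\<forall>v<length ds. \<forall>u<length ds. P v \<noteq> Q u"
    proof (intro allI impI)
      fix v u assume "v < length ds" "u < length ds"
      then show "P v \<noteq> Q u"
        using early[of v] early[of u] late[of v] late[of u] N_def unfolding q_def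
        by (cases "v < e"; cases "u < e") auto
    qed
    show "inj_on P {..<length ds}"
    proof (rule inj_onI)
      fix v u assume vu: "v \<in> {..<length ds}" "u \<in> {..<length ds}" and eq: "P v = P u"
      show "v = u"
      proof (cases "v < e"; cases "u < e")
        assume "v < e" "u < e" then show ?thesis using eq unfolding P_def by simp
      next
        assume "v < e" "\<not> u < e" then show ?thesis using early[of v] late[of u] vu eq N_def q_def by auto
      next
        assume "\<not> v < e" "u < e" then show ?thesis using early[of u] late[of v] vu eq N_def q_def by auto
      next
        assume "\<not> v < e" "\<not> u < e"
        then have "slot v = slot u" using eq unfolding P_def by simp
        then show ?thesis using slot_inj[of v u] \<open>\<not> v < e\<close> \<open>\<not> u < e\<close> vu N_def by simp
      qed
    qed
    show "inj_on Q {..<length ds}"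
    proof (rule inj_onI)
      fix v u assume vu: "v \<in> {..<length ds}" "u \<in> {..<length ds}" and eq: "Q v = Q u"
      show "v = u"
      proof (cases "v < e"; cases "u < e")
        assume "v < e" "u < e" then show ?thesis using eq unfolding Q_def by simp
      next
        assume "v < e" "\<not> u < e" then show ?thesis using early[of v] late[of u] vu eq N_def q_def by auto
      next
        assume "\<not> v < e" "u < e" then show ?thesis using early[of u] late[of v] vu eq N_def q_def by auto
      next
        assume nv: "\<not> v < e" and nu: "\<not> u < e"
        then have "\<rho> (slot v) = \<rho> (slot u)" using eq unfolding Q_def by simp
        moreover have "slot v \<in> S" "slot u \<in> S" using slotS nv nu vu N_def by auto
        ultimately have "slot v = slot u" using r_inj inj_onD by metis
        then show ?thesis using slot_inj[of v u] nv nu vu N_def by simp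
      qed
    qed
  qed
qed

lemma card_le_ival: "A \<subseteq> {x<..x+u} \<Longrightarrow> card A \<le> (u::nat)"
  using card_mono[of "{x<..x+u}" A] by simp

lemma card_le_ival1: "A \<subseteq> {1..u} \<Longrightarrow> card A \<le> (u::nat)"
  using card_mono[of "{1..u}" A] by simp

lemma card_ge_ival1: "{1..u} \<subseteq> A \<Longrightarrow> finite A \<Longrightarrow> (u::nat) \<le> card A"
  using card_mono[of A "{1..u}"] by simp

lemma nec_main:
  fixes ds :: "nat list" and a b k :: nat and P Q :: "nat \<Rightarrow> nat"
  assumes B: "\<forall>v<length ds. 1 \<le> P v \<and> P v < Q v \<and> Q v \<le> 2 * length ds \<and> P v \<le> ds!v \<and> Q v - P v \<le> ds!v"
    and D: "\<forall>v<length ds. \<forall>u<length ds. P v \<noteq> Q u"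
    and iP: "inj_on P {..<length ds}" and iQ: "inj_on Q {..<length ds}"
    and C: "\<forall>r\<in>{1..2*length ds}. \<exists>v<length ds. r = P v \<or> r = Q v"
    and da: "\<forall>v<k. ds!v = a" and db: "\<forall>v<length ds. k \<le> v \<longrightarrow> ds!v = b"
    and k1: "1 \<le> k" and kN: "k < length ds" and ab: "a < b" and aN: "a < length ds"
    and Nb: "length ds \<le> b" and bk: "b < length ds + k"
  shows "length ds + k \<le> 2 * a \<and> 0 < b - length ds \<and>
    ((k + length ds - b - 1) div (2*(b - length ds)) + 1) * (b - a) + (k + length ds - b - 1) mod (2*(b - length ds)) + 1 \<le> a"
proof -
  define N where "N = length ds"
  define e where "e = b - N"
  define w where "w = b - a"
  have dle: "ds!v \<le> b" if "v < N" for v using da db ab that N_def by (cases "v < k") auto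
  have Pd: "P v \<le> ds!v" "Q v - P v \<le> ds!v" "1 \<le> P v" "P v < Q v" "Q v \<le> 2*N" if "v < N" for v
    using B that N_def by auto
  have cQ: "card (Q ` A) = card A" if "A \<subseteq> {..<N}" for A
    using card_image[OF inj_on_subset[OF iQ]] that N_def by metis
  have cP: "card (P ` A) = card A" if "A \<subseteq> {..<N}" for A
    using card_image[OF inj_on_subset[OF iP]] that N_def by metis
  define Ea where "Ea = {v. v < N \<and> Q v \<le> b}"
  have finEa: "finite Ea" unfolding Ea_def by simp
  have cEa: "card Ea \<le> e"
  proof -
    have "P ` {..<N} \<union> Q ` Ea \<subseteq> {1..b}"
    proof
      fix z assume "z \<in> P ` {..<N} \<union> Q ` Ea"
      then obtain v where v: "v < N" "z = P v \<or> (z = Q v \<and> Q v \<le> b)" unfolding Ea_def by auto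
      have "P v \<le> b" using Pd(1)[OF v(1)] dle[OF v(1)] by simp
      then show "z \<in> {1..b}" using v Pd(3,4)[OF v(1)] by auto
    qed
    then have "card (P ` {..<N} \<union> Q ` Ea) \<le> b" by (rule card_le_ival1)
    moreover have "P ` {..<N} \<inter> Q ` Ea = {}" using D N_def unfolding Ea_def by auto
    moreover have "card (P ` {..<N}) = N" using card_image[OF iP] N_def by simp
    moreover have "card (Q ` Ea) = card Ea" by (rule cQ) (auto simp: Ea_def)
    ultimately have "N + card Ea \<le> b" using finEa by (simp add: card_Un_disjoint)
    then show ?thesis unfolding e_def by simp
  qed
  define LA where "LA = {v. v < k \<and> b < Q v}"
  have finLA: "finite LA" unfolding LA_def by simp
  have kLA: "k \<le> card LA + e"
  proof -
    have "{..<k} \<subseteq> LA \<union> Ea" unfolding LA_def Ea_def using kN N_def by auto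
    then have "k \<le> card (LA \<union> Ea)" using finLA finEa card_mono[of "LA \<union> Ea" "{..<k}"] by simp
    also have "\<dots> \<le> card LA + card Ea" by (rule card_Un_le)
    finally show ?thesis using cEa by simp
  qed
  have LAP: "P v \<le> a" "Q v \<le> P v + a" "b < Q v" "v < N" if "v \<in> LA" for v
  proof -
    have v: "v < k" "b < Q v" using that unfolding LA_def by auto
    then have vN: "v < N" using kN N_def by simp
    show "P v \<le> a" "Q v \<le> P v + a" using Pd[OF vN] da v by auto
    show "b < Q v" "v < N" using v vN by auto
  qed
  have cLA: "card LA \<le> 2 * a - b"
  proof -
    have "Q ` LA \<subseteq> {b<..2*a}" using LAP by fastforce
    then have "card (Q ` LA) \<le> 2 * a - b" using card_mono[of "{b<..2*a}" "Q ` LA"] by simp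
    moreover have "card (Q ` LA) = card LA" by (rule cQ) (use LAP in auto)
    ultimately show ?thesis by simp
  qed
  have part1: "N + k \<le> 2 * a" using kLA cLA bk Nb unfolding e_def N_def by linarith
  have win: "card {v\<in>LA. T < P v \<and> P v \<le> T + w} \<le> T \<and> card {v\<in>LA. T < P v \<and> P v \<le> T + w} \<le> 2 * e" for T
  proof (cases "a \<le> T")
    case True
    then have "{v\<in>LA. T < P v \<and> P v \<le> T + w} = {}" using LAP by force
    then show ?thesis by (metis card.empty zero_le)
  next
    case False
    define Y where "Y = {v. v < N \<and> b < Q v \<and> P v \<le> T}"
    define Z where "Z = {v\<in>LA. T < P v \<and> P v \<le> T + w}"
    have finY: "finite Y" "finite Z" unfolding Y_def Z_def LA_def by auto
    have YZ: "Y \<inter> Z = {}" unfolding Y_def Z_def by auto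
    have "Q ` (Y \<union> Z) \<subseteq> {b<..b+T}"
    proof
      fix z assume "z \<in> Q ` (Y \<union> Z)"
      then obtain v where v: "v \<in> Y \<union> Z" "z = Q v" by auto
      show "z \<in> {b<..b+T}"
      proof (cases "v \<in> Y")
        case True
        then have "v < N" "b < Q v" "P v \<le> T" unfolding Y_def by auto
        then show ?thesis using Pd[of v] dle[of v] v by auto
      next
        case False
        then have vZ: "v \<in> Z" using v by simp
        then have "v \<in> LA" "P v \<le> T + w" unfolding Z_def by auto
        then show ?thesis using LAP[of v] v ab unfolding w_def by auto
      qed
    qed
    moreover have "card (Q ` (Y \<union> Z)) = card Y + card Z"
    proof -
      have "Y \<union> Z \<subseteq> {..<N}" unfolding Y_def Z_def using LAP by auto
      then have "card (Q ` (Y \<union> Z)) = card (Y \<union> Z)" by (rule cQ)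
      then show ?thesis using finY YZ by (simp add: card_Un_disjoint)
    qed
    ultimately have yz: "card Y + card Z \<le> T" using card_le_ival[of "Q ` (Y \<union> Z)" b T] by simp
    have "{1..T} \<subseteq> P ` Y \<union> P ` Ea \<union> Q ` Ea"
    proof
      fix r assume r: "r \<in> {1..T}"
      then have rr: "r \<in> {1..2*length ds}" using False aN by auto
      obtain v where v0: "v < length ds" "r = P v \<or> r = Q v" using bspec[OF C rr] by blast
      then have v: "v < N" "r = P v \<or> r = Q v" using N_def by auto
      show "r \<in> P ` Y \<union> P ` Ea \<union> Q ` Ea"
      proof (cases "Q v \<le> b")
        case True then have "v \<in> Ea" unfolding Ea_def using v by simp
        then show ?thesis using v by auto
      next
        case nb: False
        then have "r \<noteq> Q v" using r False ab by auto
        then have "r = P v" using v by simp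
        then have "v \<in> Y" unfolding Y_def using v nb r by auto
        then show ?thesis using \<open>r = P v\<close> by auto
      qed
    qed
    then have "T \<le> card (P ` Y \<union> P ` Ea \<union> Q ` Ea)" using finY finEa
      by (intro card_ge_ival1) auto
    also have "\<dots> \<le> card (P ` Y \<union> P ` Ea) + card (Q ` Ea)" by (rule card_Un_le)
    also have "\<dots> \<le> card (P ` Y) + card (P ` Ea) + card (Q ` Ea)"
      using card_Un_le[of "P ` Y" "P ` Ea"] by simp
    also have "\<dots> \<le> card Y + card Ea + card Ea"
      by (intro add_mono card_image_le finY finEa)
    finally have "T \<le> card Y + 2 * e" using cEa by simp
    then show ?thesis using yz unfolding Z_def by simp
  qed
  have blocks: "card {v\<in>LA. P v \<le> (j+1)*w} \<le> 2*e*j" for j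
  proof (induction j)
    case 0
    have "{v\<in>LA. P v \<le> (0+1)*w} = {v\<in>LA. 0 < P v \<and> P v \<le> 0 + w}" using LAP Pd by fastforce
    then show ?case using win[of 0] by simp
  next
    case (Suc j)
    have "{v\<in>LA. P v \<le> (Suc j+1)*w} \<subseteq> {v\<in>LA. P v \<le> (j+1)*w} \<union> {v\<in>LA. (j+1)*w < P v \<and> P v \<le> (j+1)*w + w}"
      by auto
    then have "card {v\<in>LA. P v \<le> (Suc j+1)*w} \<le> card ({v\<in>LA. P v \<le> (j+1)*w} \<union> {v\<in>LA. (j+1)*w < P v \<and> P v \<le> (j+1)*w + w})"
      using finLA by (intro card_mono) auto
    also have "\<dots> \<le> card {v\<in>LA. P v \<le> (j+1)*w} + card {v\<in>LA. (j+1)*w < P v \<and> P v \<le> (j+1)*w + w}"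
      by (rule card_Un_le)
    also have "\<dots> \<le> 2*e*j + 2*e" using Suc win[of "(j+1)*w"] by linarith
    finally show ?case by simp
  qed
  have w1: "1 \<le> w" using ab unfolding w_def by simp
  have e1: "0 < e"
  proof (rule ccontr)
    assume "\<not> 0 < e"
    then have e0: "e = 0" by simp
    have "LA \<subseteq> {v\<in>LA. P v \<le> (a+1)*w}"
    proof
      fix v assume "v \<in> LA"
      moreover have "a \<le> (a+1)*w" using w1 mult_le_mono2[of 1 w "a+1"] by simp
      ultimately show "v \<in> {v\<in>LA. P v \<le> (a+1)*w}" using LAP[of v] by auto
    qed
    then have "card LA \<le> card {v\<in>LA. P v \<le> (a+1)*w}" using finLA by (intro card_mono) auto
    then have "card LA \<le> 0" using blocks[of a] e0 by simp
    then show False using kLA k1 e0 by simp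
  qed
  define y where "y = k - e"
  define q where "q = 2 * e"
  define c where "c = (y - 1) div q"
  define u where "u = (y - 1) mod q"
  have y1: "1 \<le> y" using bk Nb unfolding y_def e_def N_def by simp
  have yqc: "y - 1 = q * c + u" unfolding c_def u_def by simp
  have cnt: "card {v\<in>LA. P v \<le> (c+1)*w + u} \<le> y - 1"
  proof -
    have "{v\<in>LA. P v \<le> (c+1)*w + u} \<subseteq> {v\<in>LA. P v \<le> (c+1)*w} \<union> {v\<in>LA. (c+1)*w < P v \<and> P v \<le> (c+1)*w + u}"
      by auto
    then have "card {v\<in>LA. P v \<le> (c+1)*w + u} \<le> card ({v\<in>LA. P v \<le> (c+1)*w} \<union> {v\<in>LA. (c+1)*w < P v \<and> P v \<le> (c+1)*w + u})"
      using finLA by (intro card_mono) auto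
    also have "\<dots> \<le> card {v\<in>LA. P v \<le> (c+1)*w} + card {v\<in>LA. (c+1)*w < P v \<and> P v \<le> (c+1)*w + u}"
      by (rule card_Un_le)
    also have "card {v\<in>LA. (c+1)*w < P v \<and> P v \<le> (c+1)*w + u} \<le> u"
    proof -
      have "P ` {v\<in>LA. (c+1)*w < P v \<and> P v \<le> (c+1)*w + u} \<subseteq> {(c+1)*w<..(c+1)*w + u}" by auto
      then have "card (P ` {v\<in>LA. (c+1)*w < P v \<and> P v \<le> (c+1)*w + u}) \<le> u"
        by (rule card_le_ival)
      moreover have "card (P ` {v\<in>LA. (c+1)*w < P v \<and> P v \<le> (c+1)*w + u}) = card {v\<in>LA. (c+1)*w < P v \<and> P v \<le> (c+1)*w + u}"
        by (rule cP) (use LAP in auto)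
      ultimately show ?thesis by simp
    qed
    finally show ?thesis using blocks[of c] yqc unfolding q_def by simp
  qed
  have "\<exists>v\<in>LA. (c+1)*w + u < P v"
  proof (rule ccontr)
    assume "\<not> (\<exists>v\<in>LA. (c+1)*w + u < P v)"
    then have "LA \<subseteq> {v\<in>LA. P v \<le> (c+1)*w + u}" by auto
    then have "card LA \<le> card {v\<in>LA. P v \<le> (c+1)*w + u}" using finLA by (intro card_mono) auto
    then have "card LA \<le> y - 1" using cnt by (rule le_trans)
    moreover have "y \<le> card LA" using kLA unfolding y_def by simp
    ultimately show False using y1 by simp
  qed
  then obtain v where "v \<in> LA" "(c+1)*w + u < P v" by blast
  then have fin: "(c+1)*w + u + 1 \<le> a" using LAP(1)[of v] by simp
  have yv: "y = k + length ds - b" unfolding y_def e_def N_def using Nb by simp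
  have cv: "c = (k + length ds - b - 1) div (2*(b - length ds))" unfolding c_def q_def e_def N_def yv ..
  have uv: "u = (k + length ds - b - 1) mod (2*(b - length ds))" unfolding u_def q_def e_def N_def yv ..
  have e1': "0 < b - length ds" using e1 unfolding e_def N_def .
  have p1': "length ds + k \<le> 2 * a" using part1 unfolding N_def .
  show ?thesis using fin p1' e1' unfolding cv uv w_def by blast
qed

definition crit :: "nat \<Rightarrow> nat \<Rightarrow> nat \<Rightarrow> nat \<Rightarrow> bool" where
  "crit N a k b \<longleftrightarrow> N \<le> a \<or> (k < N \<and> k \<le> a \<and> (N + k \<le> b \<or> (N \<le> b \<and>
     (if N - a \<le> b - N then N + k \<le> 2 * a
      else 0 < b - N \<and> ((k + N - b - 1) div (2 * (b - N)) + 1) * (b - a) + (k + N - b - 1) mod (2 * (b - N)) + 1 \<le> a))))"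

lemma char:
  fixes ds :: "nat list" and a b k :: nat
  assumes da: "\<forall>v<k. ds!v = a" and db: "\<forall>v<length ds. k \<le> v \<longrightarrow> ds!v = b"
    and k1: "1 \<le> k" and kN: "k \<le> length ds" and ab: "k < length ds \<longrightarrow> a < b"
  shows "two_visits_feasible ds \<longleftrightarrow> crit (length ds) a k b"
proof
  define N where "N = length ds"
  have dge: "a \<le> ds!v" if "v < N" for v using da db ab that N_def by (cases "v < k") auto
  assume cr: "crit (length ds) a k b"
  show "two_visits_feasible ds"
  proof (cases "N \<le> a")
    case True
    show ?thesis
    proof (rule rr_feasible[of 0])
      show "\<forall>v<length ds. 0 \<le> v \<longrightarrow> 0 + v + 1 \<le> ds!v \<and> length ds - 0 \<le> ds!v"
      proof (intro allI impI conjI)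
        fix v assume v: "v < length ds"
        then have "a \<le> ds!v" using dge N_def by simp
        then show "0 + v + 1 \<le> ds ! v" "length ds - 0 \<le> ds ! v" using v True N_def by auto
      qed
    qed auto
  next
    case False
    then have c2: "k < N" "k \<le> a" "N + k \<le> b \<or> (N \<le> b \<and>
     (if N - a \<le> b - N then N + k \<le> 2 * a
      else 0 < b - N \<and> ((k + N - b - 1) div (2 * (b - N)) + 1) * (b - a) + (k + N - b - 1) mod (2 * (b - N)) + 1 \<le> a))"
      using cr unfolding crit_def N_def by auto
    have ab': "a < b" using ab c2 N_def by simp
    have dv: "ds!v = (if v < k then a else b)" if "v < N" for v using da db that N_def by auto
    show ?thesis
    proof (cases "N + k \<le> b")
      case True
      show ?thesis
      proof (rule rr_feasible[of k])
        show "k \<le> length ds" using kN .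
        show "\<forall>v<length ds. v < k \<longrightarrow> v + 1 \<le> ds ! v \<and> k \<le> ds ! v" using dv c2 N_def by auto
        show "\<forall>v<length ds. k \<le> v \<longrightarrow> k + v + 1 \<le> ds ! v \<and> length ds - k \<le> ds ! v"
          using dv True N_def by auto
      qed
    next
      case nb: False
      then have Nb: "N \<le> b" and br: "(if N - a \<le> b - N then N + k \<le> 2 * a
        else 0 < b - N \<and> ((k + N - b - 1) div (2 * (b - N)) + 1) * (b - a) + (k + N - b - 1) mod (2 * (b - N)) + 1 \<le> a)"
        using c2(3) nb by blast+
      show ?thesis
      proof (cases "N - a \<le> b - N")
        case True
        then have N2: "N + k \<le> 2 * a" using br by simp
        show ?thesis
        proof (rule rr_feasible[of "N - a"])
          show "N - a \<le> length ds" using N_def by simp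
          show "\<forall>v<length ds. v < N - a \<longrightarrow> v + 1 \<le> ds ! v \<and> N - a \<le> ds ! v"
            using dv N2 True nb False N_def by auto
          show "\<forall>v<length ds. N - a \<le> v \<longrightarrow> N - a + v + 1 \<le> ds ! v \<and> length ds - (N - a) \<le> ds ! v"
            using dv N2 True nb False N_def ab' by auto
        qed
      next
        case nt: False
        then have e1: "0 < b - N" and cnd: "((k + N - b - 1) div (2 * (b - N)) + 1) * (b - a) + (k + N - b - 1) mod (2 * (b - N)) + 1 \<le> a"
          using br unfolding if_not_P[OF nt] by blast+
        show ?thesis
        proof (rule periodic_feasible[of ds a "N - a - (b - N)" "b - N" b k])
          show "length ds = a + (N - a - (b - N)) + (b - N)" using nt False N_def by simp
          show "b = length ds + (b - N)" using Nb N_def by simp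
          show "1 \<le> b - N" using e1 by simp
          show "b - N < k" using nb Nb by simp
          show "k \<le> length ds" using kN .
          show "1 \<le> N - a - (b - N)" using nt by simp
          have x1: "k - (b - N) - 1 = k + N - b - 1" using Nb by simp
          have x2: "N - a - (b - N) + 2 * (b - N) = b - a" using nt Nb False by simp
          show "((k - (b - N) - 1) div (2 * (b - N)) + 1) * (N - a - (b - N) + 2 * (b - N)) +
              (k - (b - N) - 1) mod (2 * (b - N)) + 1 \<le> a" unfolding x1 x2 using cnd .
          show "\<forall>v<k. a \<le> ds ! v" using da by simp
          show "\<forall>v<length ds. k \<le> v \<longrightarrow> b \<le> ds ! v" using db by simp
        qed
      qed
    qed
  qed
next
  define N where "N = length ds"
  assume fe: "two_visits_feasible ds"
  obtain P Q where B: "\<forall>v<length ds. 1 \<le> P v \<and> P v < Q v \<and> Q v \<le> 2 * length ds \<and> P v \<le> ds!v \<and> Q v - P v \<le> ds!v"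
    and D: "\<forall>v<length ds. \<forall>u<length ds. P v \<noteq> Q u"
    and iP: "inj_on P {..<length ds}" and iQ: "inj_on Q {..<length ds}"
    and C: "\<forall>r\<in>{1..2*length ds}. \<exists>v<length ds. r = P v \<or> r = Q v"
    using feasible_elim[OF fe] by blast
  show "crit (length ds) a k b"
  proof (cases "N \<le> a")
    case True then show ?thesis unfolding crit_def N_def by simp
  next
    case False
    have ka: "k \<le> a"
    proof -
      have "P ` {..<k} \<subseteq> {1..a}" using B da kN by fastforce
      then have "card (P ` {..<k}) \<le> a" by (rule card_le_ival1)
      moreover have "card (P ` {..<k}) = k"
        using card_image[OF inj_on_subset[OF iP]] kN by (metis card_lessThan lessThan_subset_iff)
      ultimately show ?thesis by simp
    qed
    have kN': "k < N" using ka False kN N_def by simp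
    have ab': "a < b" using ab kN' N_def by simp
    have Nb: "N \<le> b"
    proof -
      have "P ` {..<N} \<subseteq> {1..b}"
      proof
        fix z assume "z \<in> P ` {..<N}"
        then obtain v where v: "v < N" "z = P v" by auto
        have "ds!v \<le> b" using da db v ab' N_def by (cases "v < k") auto
        then show "z \<in> {1..b}" using B v N_def by fastforce
      qed
      then have "card (P ` {..<N}) \<le> b" by (rule card_le_ival1)
      moreover have "card (P ` {..<N}) = N" using card_image[OF iP] N_def by simp
      ultimately show ?thesis by simp
    qed
    show ?thesis
    proof (cases "N + k \<le> b")
      case True then show ?thesis unfolding crit_def N_def using kN' ka N_def by auto
    next
      case nb: False
      have m: "length ds + k \<le> 2 * a \<and> 0 < b - length ds \<and>
        ((k + length ds - b - 1) div (2*(b - length ds)) + 1) * (b - a) + (k + length ds - b - 1) mod (2*(b - length ds)) + 1 \<le> a"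
        by (rule nec_main[OF B D iP iQ C da db k1]) (use kN' ab' False Nb nb N_def in auto)
      show ?thesis unfolding crit_def using m kN' ka Nb N_def by auto
    qed
  qed
qed

definition prog :: "instr list" where
  "prog = [
    JmpLess 1 0 2,
    Accept,
    Const 2 1,
    Read 3 1,
    Sub 7 0 2,
    Read 4 7,
    JmpLess 3 0 8,
    Accept,
    Const 5 1,
    JmpLess 5 0 11,
    Jmp 15,
    Read 6 5,
    JmpLess 3 6 15,
    Add 5 5 2,
    Jmp 9,
    JmpLess 5 0 17,
    Reject,
    JmpLess 3 5 16,
    Add 6 0 5,
    JmpLess 4 6 21,
    Accept,
    JmpLess 4 0 16,
    Sub 8 4 0,
    Sub 9 0 3,
    JmpLess 8 9 29,
    Add 6 3 3,
    Add 16 0 5,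
    JmpLess 6 16 16,
    Accept,
    JmpLess 8 2 16,
    Sub 10 4 3,
    Sub 11 5 8,
    Add 15 8 8,
    Sub 16 10 15,
    Const 12 1,
    Const 13 0,
    Add 14 10 2,
    JmpLess 12 11 39,
    Jmp 46,
    Add 12 12 2,
    Add 13 13 2,
    Add 14 14 2,
    JmpLess 13 15 37,
    Const 13 0,
    Add 14 14 16,
    Jmp 37,
    JmpLess 3 14 16,
    Accept]"

lemma prog_nth:
  "prog ! 0 = JmpLess 1 0 2"
  "prog ! 1 = Accept"
  "prog ! 2 = Const 2 1"
  "prog ! 3 = Read 3 1"
  "prog ! 4 = Sub 7 0 2"
  "prog ! 5 = Read 4 7"
  "prog ! 6 = JmpLess 3 0 8"
  "prog ! 7 = Accept"
  "prog ! 8 = Const 5 1"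
  "prog ! 9 = JmpLess 5 0 11"
  "prog ! 10 = Jmp 15"
  "prog ! 11 = Read 6 5"
  "prog ! 12 = JmpLess 3 6 15"
  "prog ! 13 = Add 5 5 2"
  "prog ! 14 = Jmp 9"
  "prog ! 15 = JmpLess 5 0 17"
  "prog ! 16 = Reject"
  "prog ! 17 = JmpLess 3 5 16"
  "prog ! 18 = Add 6 0 5"
  "prog ! 19 = JmpLess 4 6 21"
  "prog ! 20 = Accept"
  "prog ! 21 = JmpLess 4 0 16"
  "prog ! 22 = Sub 8 4 0"
  "prog ! 23 = Sub 9 0 3"
  "prog ! 24 = JmpLess 8 9 29"
  "prog ! 25 = Add 6 3 3"
  "prog ! 26 = Add 16 0 5"
  "prog ! 27 = JmpLess 6 16 16"
  "prog ! 28 = Accept"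
  "prog ! 29 = JmpLess 8 2 16"
  "prog ! 30 = Sub 10 4 3"
  "prog ! 31 = Sub 11 5 8"
  "prog ! 32 = Add 15 8 8"
  "prog ! 33 = Sub 16 10 15"
  "prog ! 34 = Const 12 1"
  "prog ! 35 = Const 13 0"
  "prog ! 36 = Add 14 10 2"
  "prog ! 37 = JmpLess 12 11 39"
  "prog ! 38 = Jmp 46"
  "prog ! 39 = Add 12 12 2"
  "prog ! 40 = Add 13 13 2"
  "prog ! 41 = Add 14 14 2"
  "prog ! 42 = JmpLess 13 15 37"
  "prog ! 43 = Const 13 0"
  "prog ! 44 = Add 14 14 16"
  "prog ! 45 = Jmp 37"
  "prog ! 46 = JmpLess 3 14 16"
  "prog ! 47 = Accept"
  by (simp_all add: prog_def)

lemma len_prog: "length prog = 48" by (simp add: prog_def)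

definition reach :: "nat list \<Rightarrow> config \<Rightarrow> config \<Rightarrow> nat \<Rightarrow> bool" where
  "reach ds c c' t \<longleftrightarrow> (step prog ds ^^ t) c = c'"

lemma reach_0: "reach ds c c 0" by (simp add: reach_def)

lemma reach_Suc: "reach ds c c' (Suc t) \<longleftrightarrow> reach ds (step prog ds c) c' t"
  by (simp add: reach_def funpow_Suc_right del: funpow.simps)

lemma reach_trans: "reach ds c1 c2 t1 \<Longrightarrow> reach ds c2 c3 t2 \<Longrightarrow> reach ds c1 c3 (t1 + t2)"
  unfolding reach_def by (metis add.commute comp_apply funpow_add)

lemma reach_num: "reach ds c c' (numeral w) \<longleftrightarrow> reach ds (step prog ds c) c' (pred_numeral w)"
  by (simp only: numeral_eq_Suc reach_Suc)

lemma reach_zero: "reach ds c c' 0 \<longleftrightarrow> c = c'" by (simp add: reach_def)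

lemma reach_1: "reach ds c c' 1 \<longleftrightarrow> step prog ds c = c'"
  by (simp add: reach_def)

lemma step_run: "pc < 48 \<Longrightarrow> step prog ds (Running pc R) = exec_instr ds (prog ! pc) pc R"
  by (simp add: step_def len_prog)

lemmas ex_simps = reach_num reach_Suc reach_zero step_run prog_nth

lemma reach_halt: "reach ds (Halted x) (Halted x) t"
  unfolding reach_def by (induction t) (auto simp: step_def)

lemma scan:
  assumes "R 0 = length ds" "R 2 = 1" "R 3 = a" "R 5 = i" "i \<le> length ds"
  shows "\<exists>k t x. i \<le> k \<and> k \<le> length ds \<and> (\<forall>v. i \<le> v \<and> v < k \<longrightarrow> \<not> a < ds!v) \<and>
     (k < length ds \<longrightarrow> a < ds!k) \<and> t \<le> 5 * (length ds - i) + 3 \<and>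
     reach ds (Running 9 R) (Running 15 (R(5 := k, 6 := x))) t"
  using assms
proof (induction "length ds - i" arbitrary: i R)
  case 0
  then have "i = length ds" by simp
  then have "reach ds (Running 9 R) (Running 15 R) 2"
    using 0 by (simp add: ex_simps)
  moreover have "R(5 := i, 6 := R 6) = R" using 0 \<open>i = length ds\<close> by auto
  ultimately have "reach ds (Running 9 R) (Running 15 (R(5 := i, 6 := R 6))) 2" by simp
  moreover have "2 \<le> 5 * (length ds - i) + 3" by simp
  moreover have "\<forall>v. i \<le> v \<and> v < i \<longrightarrow> \<not> a < ds!v" by simp
  moreover have "i < length ds \<longrightarrow> a < ds!i" using \<open>i = length ds\<close> by simp
  moreover have "i \<le> i" "i \<le> length ds" using \<open>i = length ds\<close> by simp_all
  ultimately show ?case by blast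
next
  case (Suc m)
  then have il: "i < length ds" by simp
  show ?case
  proof (cases "a < ds!i")
    case True
    have "reach ds (Running 9 R) (Running 15 (R(6 := ds!i))) 3"
      using Suc.prems il True by (simp add: ex_simps)
    moreover have "R(5 := i, 6 := ds!i) = R(6 := ds!i)" using Suc.prems by (auto simp: fun_eq_iff)
    ultimately have "reach ds (Running 9 R) (Running 15 (R(5 := i, 6 := ds!i))) 3" by simp
    then show ?thesis using il True
      by (rule_tac exI[of _ i], rule_tac exI[of _ 3], rule_tac exI[of _ "ds!i"]) auto
  next
    case False
    define R' where "R' = R(6 := ds!i, 5 := i + 1)"
    have r1: "reach ds (Running 9 R) (Running 9 R') 5"
      using Suc.prems il False unfolding R'_def by (simp add: ex_simps)
    have "m = length ds - (i+1)" using Suc by simp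
    moreover have "R' 0 = length ds" "R' 2 = 1" "R' 3 = a" "R' 5 = i + 1" "i + 1 \<le> length ds"
      using Suc.prems il unfolding R'_def by auto
    ultimately obtain k t x where h: "i + 1 \<le> k" "k \<le> length ds" "\<forall>v. i + 1 \<le> v \<and> v < k \<longrightarrow> \<not> a < ds!v"
      "k < length ds \<longrightarrow> a < ds!k" "t \<le> 5 * (length ds - (i+1)) + 3"
      "reach ds (Running 9 R') (Running 15 (R'(5 := k, 6 := x))) t"
      using Suc.hyps(1)[of "i+1" R'] by blast
    have "R'(5 := k, 6 := x) = R(5 := k, 6 := x)" unfolding R'_def by auto
    then have "reach ds (Running 9 R) (Running 15 (R(5 := k, 6 := x))) (5 + t)"
      using reach_trans[OF r1 h(6)] by simp
    moreover have "\<forall>v. i \<le> v \<and> v < k \<longrightarrow> \<not> a < ds!v" using h(3) False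
      by (metis Suc_eq_plus1 Suc_leI le_neq_implies_less)
    moreover have "5 + t \<le> 5 * (length ds - i) + 3" using h(5) il by simp
    ultimately show ?thesis using h
      by (rule_tac exI[of _ k], rule_tac exI[of _ "5+t"], rule_tac exI[of _ x]) auto
  qed
qed

definition posf :: "nat \<Rightarrow> nat \<Rightarrow> nat \<Rightarrow> nat" where
  "posf q \<delta> t = ((t - 1) div q + 1) * (\<delta> + q) + (t - 1) mod q + 1"

lemma ploop:
  assumes "R 2 = 1" "R 11 = y" "R 15 = q" "0 < q" "R 10 = \<delta> + q" "R 16 = \<delta>" "R 12 = t" "1 \<le> t" "t \<le> y"
    "R 13 = (t - 1) mod q" "R 14 = posf q \<delta> t"
  shows "\<exists>s x1 x2. s \<le> 8 * (y - t) + 2 \<and> reach ds (Running 37 R) (Running 46 (R(12 := x1, 13 := x2, 14 := posf q \<delta> y))) s"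
  using assms
proof (induction "y - t" arbitrary: t R)
  case 0
  then have "t = y" by simp
  then have "reach ds (Running 37 R) (Running 46 R) 2"
    using 0 by (simp add: ex_simps)
  moreover have "R(12 := R 12, 13 := R 13, 14 := posf q \<delta> y) = R" using 0 \<open>t = y\<close> by auto
  ultimately have "reach ds (Running 37 R) (Running 46 (R(12 := R 12, 13 := R 13, 14 := posf q \<delta> y))) 2" by simp
  moreover have "2 \<le> 8 * (y - t) + 2" by simp
  ultimately show ?case by blast
next
  case (Suc m)
  then have ty: "t < y" by simp
  have m: "m = y - (t + 1)" using Suc by simp
  have t1: "(t + 1) - 1 = Suc (t - 1)" using Suc by simp
  show ?case
  proof (cases "(t - 1) mod q + 1 < q")
    case True
    define R' where "R' = R(12 := t + 1, 13 := (t - 1) mod q + 1, 14 := posf q \<delta> t + 1)"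
    have r1: "reach ds (Running 37 R) (Running 37 R') 5"
      using Suc.prems ty True unfolding R'_def by (simp add: ex_simps)
    have "R' 13 = (t + 1 - 1) mod q" unfolding R'_def t1 using True by (simp add: mod_Suc)
    moreover have "R' 14 = posf q \<delta> (t + 1)" unfolding R'_def posf_def t1 using True
      by (simp add: mod_Suc div_Suc)
    moreover have "R' 2 = 1" "R' 11 = y" "R' 15 = q" "R' 10 = \<delta> + q" "R' 16 = \<delta>" "R' 12 = t + 1"
      using Suc.prems unfolding R'_def by auto
    ultimately obtain s x1 x2 where h: "s \<le> 8 * (y - (t+1)) + 2"
      "reach ds (Running 37 R') (Running 46 (R'(12 := x1, 13 := x2, 14 := posf q \<delta> y))) s"
      using Suc.hyps(1)[OF m, of R'] Suc.prems ty by auto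
    have "R'(12 := x1, 13 := x2, 14 := posf q \<delta> y) = R(12 := x1, 13 := x2, 14 := posf q \<delta> y)"
      unfolding R'_def by auto
    then have "reach ds (Running 37 R) (Running 46 (R(12 := x1, 13 := x2, 14 := posf q \<delta> y))) (5 + s)"
      using reach_trans[OF r1 h(2)] by simp
    moreover have "5 + s \<le> 8 * (y - t) + 2" using h(1) ty by simp
    ultimately show ?thesis by blast
  next
    case False
    define R' where "R' = R(12 := t + 1, 13 := 0, 14 := posf q \<delta> t + 1 + \<delta>)"
    have r1: "reach ds (Running 37 R) (Running 37 R') 8"
      using Suc.prems ty False unfolding R'_def by (simp add: ex_simps)
    have "(t - 1) mod q < q" using Suc.prems(4) by simp
    then have qq: "(t - 1) mod q + 1 = q" using False by linarith
    have qq': "Suc ((t - 1) mod q) = q" using qq by simp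
    have m0: "Suc (t - 1) mod q = 0" using mod_Suc[of "t - 1" q] qq' by simp
    have d0: "Suc (t - 1) div q = Suc ((t - 1) div q)" using div_Suc[of "t - 1" q] m0 by simp
    have "R' 13 = (t + 1 - 1) mod q" unfolding R'_def t1 m0 by simp
    moreover have "R' 14 = posf q \<delta> (t + 1)"
    proof -
      have "R' 14 = ((t - 1) div q + 1) * (\<delta> + q) + (t - 1) mod q + 1 + 1 + \<delta>" unfolding R'_def posf_def by simp
      also have "\<dots> = ((t - 1) div q + 1) * (\<delta> + q) + q + 1 + \<delta>" using qq by simp
      also have "\<dots> = (Suc (t - 1) div q + 1) * (\<delta> + q) + Suc (t - 1) mod q + 1" unfolding m0 d0 by (simp add: algebra_simps)
      finally show ?thesis unfolding posf_def t1 .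
    qed
    moreover have "R' 2 = 1" "R' 11 = y" "R' 15 = q" "R' 10 = \<delta> + q" "R' 16 = \<delta>" "R' 12 = t + 1"
      using Suc.prems unfolding R'_def by auto
    ultimately obtain s x1 x2 where h: "s \<le> 8 * (y - (t+1)) + 2"
      "reach ds (Running 37 R') (Running 46 (R'(12 := x1, 13 := x2, 14 := posf q \<delta> y))) s"
      using Suc.hyps(1)[OF m, of R'] Suc.prems ty by auto
    have "R'(12 := x1, 13 := x2, 14 := posf q \<delta> y) = R(12 := x1, 13 := x2, 14 := posf q \<delta> y)"
      unfolding R'_def by auto
    then have "reach ds (Running 37 R) (Running 46 (R(12 := x1, 13 := x2, 14 := posf q \<delta> y))) (8 + s)"
      using reach_trans[OF r1 h(2)] by simp
    moreover have "8 + s \<le> 8 * (y - t) + 2" using h(1) ty by simp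
    ultimately show ?thesis by blast
  qed
qed

lemma after_scan:
  assumes R: "R 0 = n" "R 1 = 0" "R 2 = 1" "R 3 = a" "R 4 = b" "R 5 = k"
    and k1: "1 \<le> k" and kn: "k \<le> n" and an: "a < n"
  shows "\<exists>t \<le> 8 * n + 40. reach ds (Running 15 R) (Halted (crit n a k b)) t"
proof (cases "k < n")
  case False
  have "reach ds (Running 15 R) (Halted False) 2" using R False by (simp add: ex_simps)
  moreover have "\<not> crit n a k b" using False an unfolding crit_def by simp
  ultimately show ?thesis by (intro exI[of _ 2]) simp
next
  case kn': True
  show ?thesis
  proof (cases "a < k")
    case True
    have "reach ds (Running 15 R) (Halted False) 3" using R kn' True by (simp add: ex_simps)
    moreover have "\<not> crit n a k b" using True an unfolding crit_def by simp
    ultimately show ?thesis by (intro exI[of _ 3]) simp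
  next
    case ka: False
    show ?thesis
    proof (cases "b < n + k")
      case False
      have "reach ds (Running 15 R) (Halted True) 5" using R kn' ka False by (simp add: ex_simps)
      moreover have "crit n a k b" using False kn' ka unfolding crit_def by simp
      ultimately show ?thesis by (intro exI[of _ 5]) simp
    next
      case bk: True
      show ?thesis
      proof (cases "b < n")
        case True
        have "reach ds (Running 15 R) (Halted False) 6" using R kn' ka bk True by (simp add: ex_simps)
        moreover have "\<not> crit n a k b" using True an unfolding crit_def by simp
        ultimately show ?thesis by (intro exI[of _ 6]) simp
      next
        case nb: False
        show ?thesis
        proof (cases "b - n < n - a")
          case False
          have "reach ds (Running 15 R) (Halted (\<not> a + a < n + k)) 12"
            using R kn' ka bk nb False by (simp add: ex_simps)
          moreover have "crit n a k b = (\<not> a + a < n + k)" using False an bk kn' ka nb unfolding crit_def by auto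
          ultimately show ?thesis by (intro exI[of _ 12]) simp
        next
          case er: True
          show ?thesis
          proof (cases "b - n < 1")
            case True
            have "reach ds (Running 15 R) (Halted False) 10" using R kn' ka bk nb er True by (simp add: ex_simps)
            moreover have "\<not> crit n a k b" using True er an bk unfolding crit_def by auto
            ultimately show ?thesis by (intro exI[of _ 10]) simp
          next
            case e1: False
            define e where "e = b - n"
            define q where "q = e + e"
            define w where "w = b - a"
            define \<delta> where "\<delta> = w - q"
            define y where "y = k - e"
            define R4 where "R4 = R(6 := n + k, 8 := e, 9 := n - a, 10 := w, 11 := y, 15 := q, 16 := \<delta>,
               12 := 1, 13 := 0, 14 := w + 1)"
            have r1: "reach ds (Running 15 R) (Running 37 R4) 16"
              using R kn' ka bk nb er e1 unfolding R4_def e_def q_def w_def \<delta>_def y_def by (simp add: ex_simps)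
            have wq: "w = \<delta> + q" using er nb an unfolding w_def \<delta>_def q_def e_def by simp
            have q0: "0 < q" using e1 unfolding q_def e_def by simp
            have y1: "1 \<le> y" using bk nb unfolding y_def e_def by simp
            have "R4 2 = 1" "R4 11 = y" "R4 15 = q" "R4 10 = \<delta> + q" "R4 16 = \<delta>" "R4 12 = 1"
              "R4 13 = (1 - 1) mod q" "R4 14 = posf q \<delta> 1"
              using R wq unfolding R4_def posf_def by auto
            then obtain s x1 x2 where s: "s \<le> 8 * (y - 1) + 2"
              "reach ds (Running 37 R4) (Running 46 (R4(12 := x1, 13 := x2, 14 := posf q \<delta> y))) s"
              using ploop[of R4 y q \<delta> 1 ds] q0 y1 by auto
            define R5 where "R5 = R4(12 := x1, 13 := x2, 14 := posf q \<delta> y)"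
            have "R5 3 = a" "R5 14 = posf q \<delta> y" using R unfolding R5_def R4_def by auto
            then have r3: "reach ds (Running 46 R5) (Halted (\<not> a < posf q \<delta> y)) 2"
              by (cases "a < posf q \<delta> y") (simp_all add: ex_simps)
            have "reach ds (Running 15 R) (Halted (\<not> a < posf q \<delta> y)) (16 + s + 2)"
              using reach_trans[OF reach_trans[OF r1 s(2)[folded R5_def]] r3] by simp
            moreover have "16 + s + 2 \<le> 8 * n + 40" using s(1) kn unfolding y_def by simp
            moreover have "crit n a k b = (\<not> a < posf q \<delta> y)"
            proof -
              have yy: "y - 1 = k + n - b - 1" unfolding y_def e_def using nb by simp
              have "crit n a k b = (((k + n - b - 1) div (2 * (b - n)) + 1) * (b - a) + (k + n - b - 1) mod (2 * (b - n)) + 1 \<le> a)"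
                using er an bk kn' ka nb e1 unfolding crit_def by auto
              moreover have "posf q \<delta> y = ((k + n - b - 1) div (2 * (b - n)) + 1) * (b - a) + (k + n - b - 1) mod (2 * (b - n)) + 1"
                unfolding posf_def yy wq[symmetric] unfolding q_def w_def e_def by (simp add: mult_2)
              ultimately show ?thesis by (simp add: not_less)
            qed
            ultimately show ?thesis by (intro exI[of _ "16 + s + 2"]) simp
          qed
        qed
      qed
    qed
  qed
qed


lemma prog_Suc0: "prog ! Suc 0 = Accept" using prog_nth(2) by simp

lemma feasible_nil: "two_visits_feasible []"
  unfolding two_visits_feasible_def by simp

lemma run_reach: "run prog ds t = c \<longleftrightarrow> reach ds (Running 0 (\<lambda>r. if r = 0 then length ds else 0)) c t"
  unfolding run_def reach_def by simp

lemma main_one: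
  fixes ds :: "nat list"
  assumes so: "sorted ds" and pos: "\<forall>d\<in>set ds. 0 < d" and c2: "card (set ds) \<le> 2"
  shows "\<exists>t \<le> 100 * (length ds + 1). run prog ds t = Halted (two_visits_feasible ds)"
proof (cases "ds = []")
  case True
  have "reach ds (Running 0 (\<lambda>r. if r = 0 then length ds else 0)) (Halted True) 2"
    using True by (simp add: ex_simps prog_Suc0)
  then show ?thesis using True feasible_nil run_reach by (intro exI[of _ 2]) auto
next
  case False
  define n where "n = length ds"
  define a where "a = ds ! 0"
  define b where "b = ds ! (n - 1)"
  have n1: "1 \<le> n" using False n_def by (simp add: Suc_le_eq)
  define R0 where "R0 = (\<lambda>r::nat. if r = 0 then length ds else 0)"
  define R1 where "R1 = R0(2 := 1, 3 := a, 7 := n - 1, 4 := b)"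
  have r1: "reach ds (Running 0 R0) (Running 6 R1) 5"
    using n1 False unfolding R1_def R0_def a_def b_def n_def by (simp add: ex_simps)
  have mono: "ds ! i \<le> ds ! j" if "i \<le> j" "j < n" for i j
    using so that n_def by (simp add: sorted_iff_nth_mono)
  have ge_a: "a \<le> ds ! v" if "v < n" for v using mono[of 0 v] that unfolding a_def by simp
  have le_b: "ds ! v \<le> b" if "v < n" for v using mono[of v "n - 1"] that n1 unfolding b_def by simp
  show ?thesis
  proof (cases "a < n")
    case False
    have "reach ds (Running 6 R1) (Halted True) 2" using False unfolding R1_def R0_def n_def by (simp add: ex_simps)
    then have "reach ds (Running 0 R0) (Halted True) (5 + 2)" by (rule reach_trans[OF r1])
    moreover have "two_visits_feasible ds"
    proof (rule rr_feasible[of 0])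
      show "\<forall>v<length ds. 0 \<le> v \<longrightarrow> 0 + v + 1 \<le> ds ! v \<and> length ds - 0 \<le> ds ! v"
      proof (intro allI impI conjI)
        fix v assume v: "v < length ds"
        then have "a \<le> ds!v" using ge_a n_def by simp
        then show "0 + v + 1 \<le> ds ! v" "length ds - 0 \<le> ds ! v" using v False n_def by auto
      qed
    qed auto
    ultimately show ?thesis using run_reach unfolding R0_def by (intro exI[of _ 7]) auto
  next
    case an: True
    define R2 where "R2 = R1(5 := 1)"
    have r2: "reach ds (Running 6 R1) (Running 9 R2) 2" using an unfolding R2_def R1_def R0_def n_def by (simp add: ex_simps)
    have "R2 0 = length ds" "R2 2 = 1" "R2 3 = a" "R2 5 = 1" "1 \<le> length ds"
      unfolding R2_def R1_def R0_def using n1 n_def by auto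
    then obtain k t x where sc: "1 \<le> k" "k \<le> length ds" "\<forall>v. 1 \<le> v \<and> v < k \<longrightarrow> \<not> a < ds!v"
      "k < length ds \<longrightarrow> a < ds!k" "t \<le> 5 * (length ds - 1) + 3"
      "reach ds (Running 9 R2) (Running 15 (R2(5 := k, 6 := x))) t"
      using scan[of R2 ds a 1] by blast
    define R3 where "R3 = R2(5 := k, 6 := x)"
    have "R3 0 = n" "R3 1 = 0" "R3 2 = 1" "R3 3 = a" "R3 4 = b" "R3 5 = k"
      unfolding R3_def R2_def R1_def R0_def n_def by auto
    then obtain t' where t': "t' \<le> 8 * n + 40" "reach ds (Running 15 R3) (Halted (crit n a k b)) t'"
      using after_scan[of R3 n a b k ds] sc an n_def by auto
    have rr: "reach ds (Running 0 R0) (Halted (crit n a k b)) (5 + 2 + t + t')"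
      using reach_trans[OF reach_trans[OF reach_trans[OF r1 r2] sc(6)[folded R3_def]] t'(2)] by simp
    have tb: "5 + 2 + t + t' \<le> 100 * (length ds + 1)" using sc(5) t'(1) n_def by simp
    have da: "\<forall>v<k. ds!v = a"
    proof (intro allI impI)
      fix v assume v: "v < k"
      show "ds!v = a"
      proof (cases "v = 0")
        case True then show ?thesis unfolding a_def by simp
      next
        case False
        then have "\<not> a < ds!v" using sc(3) v by simp
        moreover have "a \<le> ds!v" using ge_a v sc(2) n_def by simp
        ultimately show ?thesis by simp
      qed
    qed
    have ab: "k < length ds \<longrightarrow> a < b" using sc(4) le_b n_def by (meson order_less_le_trans)
    have db: "\<forall>v<length ds. k \<le> v \<longrightarrow> ds!v = b"
    proof (intro allI impI)
      fix v assume v: "v < length ds" "k \<le> v"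
      then have kl: "k < length ds" by simp
      then have "a < ds!k" using sc(4) by simp
      also have "ds!k \<le> ds!v" using mono v n_def by simp
      finally have av: "a < ds!v" .
      have "a \<in> set ds" "b \<in> set ds" unfolding a_def b_def using n1 n_def by (auto intro!: nth_mem)
      moreover have "a \<noteq> b" using ab kl by simp
      ultimately have sub: "{a, b} \<subseteq> set ds" and ne: "a \<noteq> b" by auto
      have "card {a, b} \<le> card (set ds)" using sub by (intro card_mono) auto
      moreover have "card {a, b} = 2" using ne by simp
      ultimately have "card {a, b} = card (set ds)" using c2 by simp
      then have "{a, b} = set ds" using sub by (intro card_subset_eq) auto
      moreover have "ds!v \<in> set ds" using v by simp
      ultimately show "ds!v = b" using av by auto
    qed
    have "two_visits_feasible ds = crit (length ds) a k b"
      by (rule char[OF da db sc(1) sc(2) ab])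
    then show ?thesis using rr tb run_reach unfolding R0_def n_def by (intro exI[of _ "5 + 2 + t + t'"]) auto
  qed
qed

theorem theorem4:
  shows "\<exists>(P :: instr list) (c :: nat). \<forall>ds :: nat list.
           sorted ds \<and> (\<forall>d \<in> set ds. 0 < d) \<and> card (set ds) \<le> 2 \<longrightarrow>
           (\<exists>t \<le> c * (length ds + 1). run P ds t = Halted (two_visits_feasible ds))"
  using main_one by blast

end
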